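(* Let $\mathbb{M}\in\{\mathbb{N},\mathbb{Z}\}$, let $F:A^{\mathbb{M}}\to A^{\mathbb{M}}$ be a cellular automaton that is not nilpotent, and let $s\in A$ be a spreading state of $F$. Then there exists $c\in A^{\mathbb{M}}$ such that $F^n(c)_j\neq s$ for all $n\in\mathbb{N}$ and all $j\in\mathbb{M}$.
   Context: A CA is a continuous shift-commuting map on the full shift $A^{\mathbb{M}}$ over a finite alphabet, given by a local rule. A state $s$ is spreading if the local rule maps every neighborhood pattern containing $s$ to $s$. $F$ is nilpotent if there is a state $q$ with $F({}^\omega q^\omega)={}^\omega q^\omega$ (constant configuration) such that for every $c$ there is $n$ with $F^n(c)={}^\omega q^\omega$. *)

theory Defs
  imports Main
begin

definition ca_global :: "'m::plus list \<Rightarrow> ('a list \<Rightarrow> 'a) \<Rightarrow> ('m \<Rightarrow> 'a) \<Rightarrow> ('m \<Rightarrow> 'a)" where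
  "ca_global N f c = (\<lambda>j. f (map (\<lambda>k. c (j + k)) N))"

definition spreading :: "'m list \<Rightarrow> ('a list \<Rightarrow> 'a) \<Rightarrow> 'a \<Rightarrow> bool" where
  "spreading N f s \<longleftrightarrow> (\<forall>w. length w = length N \<longrightarrow> s \<in> set w \<longrightarrow> f w = s)"

definition nilpotent :: "(('m \<Rightarrow> 'a) \<Rightarrow> ('m \<Rightarrow> 'a)) \<Rightarrow> bool" where
  "nilpotent F \<longleftrightarrow> (\<exists>q. F (\<lambda>_. q) = (\<lambda>_. q) \<and> (\<forall>c. \<exists>n. (F ^^ n) c = (\<lambda>_. q)))"

end

theory Submission imports Defs "HOL-Analysis.Function_Topology" begin

lemma compact_choice:
  fixes P :: "nat \<Rightarrow> ('i \<Rightarrow> 'a::finite) \<Rightarrow> bool"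
  assumes dep: "\<And>K. \<exists>S. finite S \<and> (\<forall>d d'. (\<forall>i\<in>S. d i = d' i) \<longrightarrow> P K d = P K d')"
    and mono: "\<And>K d. P (Suc K) d \<Longrightarrow> P K d"
    and ne: "\<And>K. \<exists>d. P K d"
  shows "\<exists>e. \<forall>K. P K e"
proof -
  define X where "X = product_topology (\<lambda>_::'i. discrete_topology (UNIV::'a set)) UNIV"
  have top: "topspace X = UNIV" unfolding X_def by auto
  have cs: "compact_space X" unfolding X_def
    by (simp add: compact_space_product_topology compact_space_discrete_topology)
  have mono': "P K d" if "P K' d" "K \<le> K'" for K K' d
    using that(2,1) by (induction rule: dec_induct) (auto intro: mono)
  have clo: "closedin X {d. P K d}" for K
  proof -
    obtain S where S: "finite S" "\<forall>d d'. (\<forall>i\<in>S. d i = d' i) \<longrightarrow> P K d = P K d'"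
      using dep by blast
    have "openin X (topspace X - {d. P K d})"
    proof (subst openin_subopen, intro ballI)
      fix d assume d: "d \<in> topspace X - {d. P K d}"
      define T where "T = PiE UNIV (\<lambda>i. if i \<in> S then {d i} else (UNIV::'a set))"
      have "openin X T" unfolding X_def T_def
        by (subst openin_PiE_gen) (auto intro: finite_subset[OF _ S(1)])
      moreover have "d \<in> T" unfolding T_def by auto
      moreover have "T \<subseteq> topspace X - {d. P K d}"
      proof
        fix d' assume "d' \<in> T"
        then have "\<forall>i. d' i \<in> (if i \<in> S then {d i} else UNIV)" unfolding T_def by (auto simp: PiE_def Pi_def)
        then have "\<forall>i\<in>S. d i = d' i" by (metis singletonD)
        then show "d' \<in> topspace X - {d. P K d}" using d S(2) top by auto
      qed
      ultimately show "\<exists>T. openin X T \<and> d \<in> T \<and> T \<subseteq> topspace X - {d. P K d}" by blast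
    qed
    then show ?thesis unfolding closedin_def top by auto
  qed
  define U where "U = range (\<lambda>K. {d. P K d})"
  have "\<Inter>U \<noteq> {}"
  proof (rule cs[unfolded compact_space_fip, rule_format], intro conjI allI impI ballI)
    show "C \<in> U \<Longrightarrow> closedin X C" for C using clo U_def by auto
    fix F assume F: "finite F \<and> F \<subseteq> U"
    then obtain Ks where Ks: "finite Ks" "F = (\<lambda>K. {d. P K d}) ` Ks"
      unfolding U_def by (meson finite_subset_image)
    obtain d where "P (Max (insert 0 Ks)) d" using ne by blast
    then have "d \<in> \<Inter>F" using Ks mono' by auto
    then show "\<Inter>F \<noteq> {}" by blast
  qed
  then show ?thesis unfolding U_def by auto
qed


lemma ca_comp:
  assumes "\<And>y k. k \<in> set N \<Longrightarrow> \<phi> (y + k) = \<phi> y + k"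
  shows "(ca_global N f ^^ n) (c \<circ> \<phi>) = (ca_global N f ^^ n) c \<circ> \<phi>"
proof (induction n)
  case 0 then show ?case by simp
next
  case (Suc n)
  have h: "ca_global N f (e \<circ> \<phi>) = ca_global N f e \<circ> \<phi>" for e
    unfolding ca_global_def using assms by (auto intro!: ext arg_cong[where f=f])
  have "(ca_global N f ^^ Suc n) (c \<circ> \<phi>) = ca_global N f ((ca_global N f ^^ n) (c \<circ> \<phi>))"
    by simp
  also have "\<dots> = ca_global N f ((ca_global N f ^^ n) c \<circ> \<phi>)" by (simp only: Suc.IH)
  also have "\<dots> = ca_global N f ((ca_global N f ^^ n) c) \<circ> \<phi>" by (rule h)
  also have "\<dots> = (ca_global N f ^^ Suc n) c \<circ> \<phi>" by simp
  finally show ?case .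
qed

lemma spread_prop:
  fixes N :: "int list"
  assumes sp: "spreading N f s"
  shows "set ks \<subseteq> set N \<Longrightarrow> (ca_global N f ^^ n) c (j + sum_list ks) = s
          \<Longrightarrow> (ca_global N f ^^ (n + length ks)) c j = s"
proof (induction ks arbitrary: j)
  case Nil then show ?case by simp
next
  case (Cons k ks)
  have "(ca_global N f ^^ (n + length ks)) c (j + k) = s"
    using Cons by (simp add: add.assoc)
  then have "s \<in> set (map (\<lambda>k. (ca_global N f ^^ (n + length ks)) c (j + k)) N)"
    using Cons.prems(1) by force
  moreover have "ca_global N f e j = s" if "s \<in> set (map (\<lambda>k. e (j + k)) N)" for e
    using sp that unfolding spreading_def ca_global_def by simp
  ultimately show ?case by simp
qed

lemma persist:
  fixes N :: "int list"
  assumes sp: "spreading N f s" and z: "0 \<in> set N"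
    and h: "(ca_global N f ^^ n) c j = s" and le: "n \<le> m"
  shows "(ca_global N f ^^ m) c j = s"
  using le
proof (induction rule: dec_induct)
  case base then show ?case using h .
next
  case (step m)
  have "(ca_global N f ^^ (m + length [0::int])) c j = s"
    by (rule spread_prop[OF sp]) (use z step in auto)
  then show ?case by simp
qed

definition Mon :: "int list \<Rightarrow> int set" where
  "Mon N = {sum_list ks | ks. set ks \<subseteq> set N}"

lemma Mon_0: "0 \<in> Mon N" unfolding Mon_def by (simp, rule exI[of _ "[]"], simp)

lemma Mon_add: "a \<in> Mon N \<Longrightarrow> b \<in> Mon N \<Longrightarrow> a + b \<in> Mon N"
  unfolding Mon_def by (auto, metis le_sup_iff set_append sum_list_append)

lemma Mon_mult: "a \<in> Mon N \<Longrightarrow> int m * a \<in> Mon N"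
  by (induction m) (auto simp: Mon_0 Mon_add distrib_right)

lemma Mon_mono: "a \<in> Mon N \<Longrightarrow> a \<in> Mon (k # N)"
  unfolding Mon_def by auto

lemma Mon_elem: "k \<in> set N \<Longrightarrow> k \<in> Mon N"
  unfolding Mon_def by (auto intro!: exI[of _ "[k]"])

lemma bezout_mon:
  "\<exists>g x y. g \<ge> 0 \<and> (\<forall>k\<in>set N. g dvd k) \<and> x \<in> Mon N \<and> y \<in> Mon N \<and> x - y = g"
proof (induction N)
  case Nil then show ?case using Mon_0 by fastforce
next
  case (Cons k N)
  then obtain G x y where IH: "G \<ge> 0" "\<forall>k\<in>set N. G dvd k" "x \<in> Mon N" "y \<in> Mon N" "x - y = G"
    by blast
  obtain u v where uv: "u * k + v * G = gcd k G" using bezout_int by blast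
  define x' where "x' = int (nat u) * k + int (nat v) * x + int (nat (-v)) * y"
  define y' where "y' = int (nat (-u)) * k + int (nat v) * y + int (nat (-v)) * x"
  have xm: "x \<in> Mon (k#N)" "y \<in> Mon (k#N)" "k \<in> Mon (k#N)"
    using IH Mon_mono Mon_elem by auto
  have "x' \<in> Mon (k#N)" "y' \<in> Mon (k#N)"
    unfolding x'_def y'_def by (intro Mon_add Mon_mult xm)+
  moreover have "x' - y' = gcd k G"
  proof -
    have "x' - y' = u * k + v * (x - y)"
      unfolding x'_def y'_def by (simp add: algebra_simps)
    then show ?thesis using uv IH(5) by simp
  qed
  moreover have "\<forall>k'\<in>set (k#N). gcd k G dvd k'"
    using IH(2) by (auto intro: dvd_trans)
  ultimately show ?case by (metis gcd_ge_0_int)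
qed

lemma div_bounds:
  fixes z g W :: int
  assumes "g \<ge> 1" "\<bar>z\<bar> \<le> W"
  shows "-W \<le> z div g \<and> z div g \<le> W"
proof
  show "-W \<le> z div g"
    using assms by (smt (verit) div_by_1 pos_imp_zdiv_neg_iff zdiv_mono2_neg)
  show "z div g \<le> W"
    using assms by (smt (verit) div_nonpos_pos_le0 int_div_le_self)
qed


lemma ca_dep:
  fixes N :: "int list"
  assumes "\<forall>y. \<bar>y - x\<bar> \<le> int n * sum_list (map abs N) \<longrightarrow> d y = d' y"
  shows "(ca_global N f ^^ n) d x = (ca_global N f ^^ n) d' x"
  using assms
proof (induction n arbitrary: x)
  case 0 then show ?case by simp
next
  case (Suc n)
  let ?R = "sum_list (map abs N)"
  have "(ca_global N f ^^ n) d (x + k) = (ca_global N f ^^ n) d' (x + k)" if k: "k \<in> set N" for k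
  proof (rule Suc.IH, intro allI impI)
    fix y assume y: "\<bar>y - (x + k)\<bar> \<le> int n * ?R"
    have "\<bar>k\<bar> \<le> ?R" using k by (intro member_le_sum_list) auto
    then have "\<bar>y - x\<bar> \<le> int (Suc n) * ?R" using y by (simp add: algebra_simps)
    then show "d y = d' y" using Suc.prems by blast
  qed
  then have "ca_global N f ((ca_global N f ^^ n) d) x = ca_global N f ((ca_global N f ^^ n) d') x"
    unfolding ca_global_def by (intro arg_cong[where f=f] map_cong) auto
  then show ?case by simp
qed

lemma main_int0:
  fixes N :: "int list" and f :: "'a::finite list \<Rightarrow> 'a"
  assumes z: "0 \<in> set N" and nn: "\<not> nilpotent (ca_global N f)" and sp: "spreading N f s"
  shows "\<exists>c. \<forall>n j. (ca_global N f ^^ n) c j \<noteq> s"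
proof -
  let ?F = "ca_global N f"
  have fix_s: "?F (\<lambda>_. s) = (\<lambda>_. s)"
    using sp z unfolding spreading_def ca_global_def by force
  obtain c0 where c0: "\<And>n. (?F ^^ n) c0 \<noteq> (\<lambda>_. s)"
    using nn fix_s unfolding nilpotent_def by blast
  have c0': "\<exists>j. (?F ^^ n) c0 j \<noteq> s" for n using c0[of n] by blast
  obtain g x y where gxy: "g \<ge> 0" "\<forall>k\<in>set N. g dvd k" "x \<in> Mon N" "y \<in> Mon N" "x - y = g"
    using bezout_mon by blast
  let ?R = "sum_list (map abs N)"
  have R0: "?R \<ge> 0" by (induction N) auto
  define P where "P K d \<longleftrightarrow> (\<forall>n\<le>K. \<forall>z. \<bar>z\<bar> \<le> int K \<longrightarrow> (?F ^^ n) d z \<noteq> s)" for K d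
  have "\<exists>e. \<forall>K. P K e"
  proof (rule compact_choice)
    fix K
    show "\<exists>S. finite S \<and> (\<forall>d d'. (\<forall>i\<in>S. d i = d' i) \<longrightarrow> P K d = P K d')"
    proof (intro exI conjI allI impI)
      show "finite {i::int. \<bar>i\<bar> \<le> int K + int K * ?R}"
        by (rule finite_subset[of _ "{-(int K + int K * ?R)..int K + int K * ?R}"]) auto
      fix d d' :: "int \<Rightarrow> 'a"
      assume ag: "\<forall>i\<in>{i. \<bar>i\<bar> \<le> int K + int K * ?R}. d i = d' i"
      have "(?F ^^ n) d z = (?F ^^ n) d' z" if "n \<le> K" "\<bar>z\<bar> \<le> int K" for n z
      proof (rule ca_dep, intro allI impI)
        fix y assume "\<bar>y - z\<bar> \<le> int n * ?R"
        moreover have "int n * ?R \<le> int K * ?R" using that R0 by (simp add: mult_right_mono)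
        ultimately have "\<bar>y\<bar> \<le> int K + int K * ?R" using that by linarith
        then show "d y = d' y" using ag by blast
      qed
      then show "P K d = P K d'" unfolding P_def by auto
    qed
  next
    fix K d assume h: "P (Suc K) d"
    show "P K d" unfolding P_def
    proof (intro allI impI)
      fix n z assume "n \<le> K" "\<bar>z\<bar> \<le> int K"
      then have "n \<le> Suc K" "\<bar>z\<bar> \<le> int (Suc K)" by auto
      then show "(?F ^^ n) d z \<noteq> s" using h unfolding P_def by blast
    qed
  next
    fix K
    define W where "W = int K"
    have prog: "\<exists>ks. set ks \<subseteq> set N \<and> sum_list ks = 2 * W * y + int t * g" if "t \<le> 2 * K" for t
    proof -
      have "int t * x + int (2 * K - t) * y \<in> Mon N"
        using gxy by (intro Mon_add Mon_mult)
      moreover have "int t * x + int (2 * K - t) * y = 2 * W * y + int t * g"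
        using that gxy(5) unfolding W_def by (simp add: of_nat_diff algebra_simps)
      ultimately show ?thesis unfolding Mon_def by auto
    qed
    obtain ks where ks: "\<And>t. t \<le> 2 * K \<Longrightarrow> set (ks t) \<subseteq> set N \<and> sum_list (ks t) = 2 * W * y + int t * g"
      using prog by metis
    define M where "M = Max ((\<lambda>t. length (ks t)) ` {..2 * K})"
    have M: "length (ks t) \<le> M" if "t \<le> 2 * K" for t
      unfolding M_def using that by (intro Max_ge) auto
    define T where "T = K + M"
    obtain j where j: "(?F ^^ T) c0 j \<noteq> s" using c0' by blast
    define \<sigma> where "\<sigma> = 2 * W * y + g * W"
    define \<phi> where "\<phi> z = j + \<sigma> + g * (z div g)" for z
    have phik: "\<phi> (z + k) = \<phi> z + k" if kN: "k \<in> set N" for z k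
    proof (cases "g = 0")
      case True then show ?thesis using gxy(2) kN unfolding \<phi>_def by auto
    next
      case False
      obtain r where "k = g * r" using gxy(2) kN by (meson dvdE)
      then show ?thesis unfolding \<phi>_def using False by (simp add: algebra_simps)
    qed
    have "P K (c0 \<circ> \<phi>)"
      unfolding P_def
    proof (intro allI impI)
      fix n z assume n: "n \<le> K" and zK: "\<bar>z\<bar> \<le> int K"
      obtain t where t: "t \<le> 2 * K" "\<phi> z = j + (2 * W * y + int t * g)"
      proof (cases "g = 0")
        case True then show ?thesis using that[of 0] unfolding \<phi>_def \<sigma>_def by auto
      next
        case False
        then have g1: "g \<ge> 1" using gxy(1) by simp
        have b: "-W \<le> z div g \<and> z div g \<le> W" using div_bounds[OF g1] zK W_def by auto
        show ?thesis
        proof (rule that[of "nat (z div g + W)"])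
          show "nat (z div g + W) \<le> 2 * K" using b W_def by linarith
          show "\<phi> z = j + (2 * W * y + int (nat (z div g + W)) * g)"
            using b unfolding \<phi>_def \<sigma>_def by (simp add: algebra_simps)
        qed
      qed
      show "(?F ^^ n) (c0 \<circ> \<phi>) z \<noteq> s"
      proof
        assume "(?F ^^ n) (c0 \<circ> \<phi>) z = s"
        moreover have "(?F ^^ n) (c0 \<circ> \<phi>) = (?F ^^ n) c0 \<circ> \<phi>"
          by (rule ca_comp) (rule phik)
        ultimately have "(?F ^^ n) c0 (j + sum_list (ks t)) = s"
          using t ks[OF t(1)] by simp
        then have "(?F ^^ (n + length (ks t))) c0 j = s"
          using spread_prop[OF sp] ks[OF t(1)] by blast
        moreover have "n + length (ks t) \<le> T" using M[OF t(1)] n T_def by simp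
        ultimately have "(?F ^^ T) c0 j = s" using persist[OF sp z] by blast
        then show False using j by simp
      qed
    qed
    then show "\<exists>d. P K d" by blast
  qed
  then obtain e where e: "\<And>K. P K e" by blast
  have "(?F ^^ n) e j \<noteq> s" for n j
    using e[of "max n (nat \<bar>j\<bar>)"] unfolding P_def by auto
  then show ?thesis by blast
qed


lemma nilp_nil: "nilpotent (ca_global [] f)"
  unfolding nilpotent_def ca_global_def
  by (rule exI[of _ "f []"], auto intro!: exI[of _ "Suc 0"])

lemma main_int:
  fixes N :: "int list" and f :: "'a::finite list \<Rightarrow> 'a"
  assumes nn: "\<not> nilpotent (ca_global N f)" and sp: "spreading N f s"
  shows "\<exists>c. \<forall>n j. (ca_global N f ^^ n) c j \<noteq> s"
proof -
  have "N \<noteq> []" using nn nilp_nil by blast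
  define k1 where "k1 = hd N"
  define N' where "N' = map (\<lambda>k. k - k1) N"
  let ?F = "ca_global N f" and ?G = "ca_global N' f"
  have z: "0 \<in> set N'" unfolding N'_def k1_def using \<open>N \<noteq> []\<close> by (cases N) auto
  have sp': "spreading N' f s" using sp unfolding spreading_def N'_def by simp
  have G1: "?G c = ?F c \<circ> (\<lambda>x. x - k1)" for c
    unfolding ca_global_def N'_def by (auto simp: comp_def algebra_simps)
  have Gn: "(?G ^^ n) c = (?F ^^ n) c \<circ> (\<lambda>x. x - int n * k1)" for n c
  proof (induction n)
    case 0 then show ?case by (simp add: comp_def)
  next
    case (Suc n)
    have "(?G ^^ Suc n) c = ?G ((?F ^^ n) c \<circ> (\<lambda>x. x - int n * k1))" using Suc by (simp add: comp_def)
    also have "\<dots> = ?F ((?F ^^ n) c \<circ> (\<lambda>x. x - int n * k1)) \<circ> (\<lambda>x. x - k1)" by (rule G1)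
    also have "?F ((?F ^^ n) c \<circ> (\<lambda>x. x - int n * k1)) = (?F ^^ 1) ((?F ^^ n) c \<circ> (\<lambda>x. x - int n * k1))"
      by simp
    also have "\<dots> = (?F ^^ 1) ((?F ^^ n) c) \<circ> (\<lambda>x. x - int n * k1)"
      by (rule ca_comp) (simp add: algebra_simps)
    finally show ?case by (simp add: comp_def algebra_simps)
  qed
  have "\<not> nilpotent ?G"
  proof
    assume "nilpotent ?G"
    then obtain q where q: "?G (\<lambda>_. q) = (\<lambda>_. q)" "\<forall>c. \<exists>n. (?G ^^ n) c = (\<lambda>_. q)"
      unfolding nilpotent_def by blast
    have "?F (\<lambda>_. q) x = q" for x
      using fun_cong[OF q(1), of "x + k1"] G1 by simp
    moreover have "\<exists>n. (?F ^^ n) c = (\<lambda>_. q)" for c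
    proof -
      obtain n where "(?G ^^ n) c = (\<lambda>_. q)" using q(2) by blast
      then have "(?F ^^ n) c x = q" for x
        using fun_cong[of _ _ "x + int n * k1"] Gn[of n c] by (metis add_diff_cancel_right' comp_apply)
      then show ?thesis by blast
    qed
    ultimately have "nilpotent ?F" unfolding nilpotent_def by blast
    then show False using nn by blast
  qed
  then obtain c where c: "\<forall>n j. (?G ^^ n) c j \<noteq> s" using main_int0[OF z _ sp'] by blast
  have "(?F ^^ n) c j \<noteq> s" for n j
    using c[rule_format, of n "j + int n * k1"] Gn[of n c] by simp
  then show ?thesis by blast
qed

lemma main_nat:
  fixes N :: "nat list" and f :: "'a::finite list \<Rightarrow> 'a"
  assumes nn: "\<not> nilpotent (ca_global N f)" and sp: "spreading N f s"
  shows "\<exists>c. \<forall>n j. (ca_global N f ^^ n) c j \<noteq> s"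
proof -
  define Ni where "Ni = map int N"
  let ?F = "ca_global N f" and ?G = "ca_global Ni f"
  have Gn: "(?F ^^ n) (e \<circ> int) = (?G ^^ n) e \<circ> int" for n e
  proof (induction n)
    case 0 then show ?case by simp
  next
    case (Suc n)
    show ?case using Suc unfolding Ni_def by (simp add: ca_global_def comp_def)
  qed
  have sp': "spreading Ni f s" using sp unfolding spreading_def Ni_def by simp
  have "\<not> nilpotent ?G"
  proof
    assume "nilpotent ?G"
    then obtain q where q: "?G (\<lambda>_. q) = (\<lambda>_. q)" "\<forall>c. \<exists>n. (?G ^^ n) c = (\<lambda>_. q)"
      unfolding nilpotent_def by blast
    have "?F (\<lambda>_. q) = (\<lambda>_. q)"
      using Gn[of 1 "\<lambda>_. q"] q(1) by (simp add: comp_def)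
    moreover have "\<exists>n. (?F ^^ n) c = (\<lambda>_. q)" for c
    proof -
      obtain n where "(?G ^^ n) (\<lambda>z. c (nat z)) = (\<lambda>_. q)" using q(2) by blast
      moreover have ci: "(\<lambda>z. c (nat z)) \<circ> int = c" by (auto simp: comp_def)
      ultimately have "(?F ^^ n) c = (\<lambda>_. q) \<circ> int" using Gn[of n "\<lambda>z. c (nat z)"] by metis
      then show ?thesis by (auto simp: comp_def)
    qed
    ultimately have "nilpotent ?F" unfolding nilpotent_def by blast
    then show False using nn by blast
  qed
  then obtain e where e: "\<forall>n j. (?G ^^ n) e j \<noteq> s" using main_int[OF _ sp'] by blast
  have "(?F ^^ n) (e \<circ> int) j \<noteq> s" for n j using e Gn by simp
  then show ?thesis by blast
qed

theorem proposition2p4: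
  shows "(\<forall>(N :: nat list) (f :: 'a::finite list \<Rightarrow> 'a) s.
            \<not> nilpotent (ca_global N f) \<longrightarrow> spreading N f s \<longrightarrow>
            (\<exists>c. \<forall>n j. (ca_global N f ^^ n) c j \<noteq> s))
       \<and> (\<forall>(N :: int list) (f :: 'a::finite list \<Rightarrow> 'a) s.
            \<not> nilpotent (ca_global N f) \<longrightarrow> spreading N f s \<longrightarrow>
            (\<exists>c. \<forall>n j. (ca_global N f ^^ n) c j \<noteq> s))"
  using main_nat main_int by blast

end
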